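(* Let $\mathcal{G}=\langle\mathbb{V},\mathbb{E}\rangle$ and the bijection $e$ be as in the context, and let $\pi$ be an $\mathcal{H}^{(\ast)}$-partition of $\mathcal{P}(\mathcal{G},e)$ in which every gadget $\mathcal{N}_v$, $v\in\mathbb{V}$, is well-oriented. Then $\{\langle v,u\rangle:\{\langle v,u\rangle\}\in\pi\}$ (the set of arcs of $\mathcal{G}$ which, as vertices of $\mathcal{P}(\mathcal{G},e)$, form singleton blocks of $\pi$) is a feedback arc set of $\mathcal{G}$ of size at most $|\pi|-|\mathbb{V}|\cdot(|\mathbb{E}|+1)$.
   Context: Standing assumption: $\mathcal{G}=\langle\mathbb{V},\mathbb{E}\rangle$ is a finite directed graph with $\mathbb{V}\ne\emptyset$, without self-loops, in which every vertex has in-degree $1$ or out-degree $1$; let $m=|\mathbb{E}|$ and let $e:\mathbb{E}\to\{1,\dots,m\}$ be a bijection. A feedback arc set of $\mathcal{G}$ is a subset of $\mathbb{E}$ meeting every directed cycle. For $v\in\mathbb{V}$ the gadget $\mathcal{N}_v=\langle\mathcal{V}_v,\mathcal{E}_v\rangle$ has vertices $\mathcal{V}_v=\{v_{i,j}:0\le i,j\le m\}$ (distinct for distinct $v$) and arcs $\mathcal{E}_v=\{\langle v_{i,j},v_{i,j+1}\rangle:0\le i\le m,0\le j<m\}\cup\{\langle v_{i,j},v_{i+1,j}\rangle:0\le i<m,0\le j\le m\}$. Let $\mathcal{L}_v=\{\{v_{i,0},\dots,v_{i,m}\}:0\le i\le m\}$ and $\mathcal{R}_v=\{\{v_{0,i},\dots,v_{m,i}\}:0\le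 i\le m\}$. The digraph $\mathcal{P}(\mathcal{G},e)$ has vertex set $\bigcup_{v\in\mathbb{V}}\mathcal{V}_v\cup\mathbb{E}$ (each arc of $\mathcal{G}$ is also a vertex) and arc set $\bigcup_{v\in\mathbb{V}}\mathcal{E}_v\cup\{\langle\langle v,u\rangle,v_{e(\langle v,u\rangle),0}\rangle:\langle v,u\rangle\in\mathbb{E}\}\cup\{\langle\langle v,u\rangle,u_{0,e(\langle v,u\rangle)}\rangle:\langle v,u\rangle\in\mathbb{E}\}$; it is a DAG. For a DAG $G$, a partition $\pi$ of its vertex set is an $\mathcal{H}^{(\ast)}$-partition if every induced subgraph $G[P]$, $P\in\pi$, has a directed Hamiltonian path and the quotient digraph $G/\pi$ (vertex set $\pi$, arc $\langle P,Q\rangle$ for $P\ne Q$ whenever some arc of $G$ goes from $P$ to $Q$) is acyclic. For such $\pi$ of $\mathcal{P}(\mathcal{G},e)$ and $v\in\mathbb{V}$, let $\pi|_{\mathcal{N}_v}=\{P\cap\mathcal{V}_v:P\in\pi,\ P\cap\mathcal{V}_v\ne\emptyset\}$; the gadget $\mathcal{N}_v$ is well-oriented in $\pi$ if $\pi|_{\mathcal{N}_v}=\mathcal{L}_v$ or $\pi|_{\mathcal{N}_v}=\mathcal{R}_v$. *)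

theory Defs
  imports Main
begin

definition indeg :: "('v \<times> 'v) set \<Rightarrow> 'v \<Rightarrow> nat" where
  "indeg E v = card {u. (u, v) \<in> E}"

definition outdeg :: "('v \<times> 'v) set \<Rightarrow> 'v \<Rightarrow> nat" where
  "outdeg E v = card {u. (v, u) \<in> E}"

definition std_graph :: "'v set \<Rightarrow> ('v \<times> 'v) set \<Rightarrow> bool" where
  "std_graph V E \<longleftrightarrow> finite V \<and> V \<noteq> {} \<and> E \<subseteq> V \<times> V \<and>
     (\<forall>v. (v, v) \<notin> E) \<and> (\<forall>v\<in>V. indeg E v = 1 \<or> outdeg E v = 1)"

definition dir_cycle :: "('v \<times> 'v) set \<Rightarrow> 'v list \<Rightarrow> bool" where
  "dir_cycle E cs \<longleftrightarrow> cs \<noteq> [] \<and> distinct cs \<and>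
     (\<forall>i < length cs. (cs ! i, cs ! (Suc i mod length cs)) \<in> E)"

definition cycle_arcs :: "'v list \<Rightarrow> ('v \<times> 'v) set" where
  "cycle_arcs cs = {(cs ! i, cs ! (Suc i mod length cs)) | i. i < length cs}"

definition feedback_arc_set :: "('v \<times> 'v) set \<Rightarrow> ('v \<times> 'v) set \<Rightarrow> bool" where
  "feedback_arc_set E F \<longleftrightarrow> F \<subseteq> E \<and>
     (\<forall>cs. dir_cycle E cs \<longrightarrow> F \<inter> cycle_arcs cs \<noteq> {})"

(* vertices of P(G,e): gadget vertices v_{i,j} and arcs of G *)
datatype 'v pnode = Grid 'v nat nat | ArcN "'v \<times> 'v"

definition gadget_verts :: "nat \<Rightarrow> 'v \<Rightarrow> 'v pnode set" where
  "gadget_verts m v = {Grid v i j | i j. i \<le> m \<and> j \<le> m}"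

definition gadget_arcs :: "nat \<Rightarrow> 'v \<Rightarrow> ('v pnode \<times> 'v pnode) set" where
  "gadget_arcs m v =
     {(Grid v i j, Grid v i (Suc j)) | i j. i \<le> m \<and> j < m} \<union>
     {(Grid v i j, Grid v (Suc i) j) | i j. i < m \<and> j \<le> m}"

definition gadget_L :: "nat \<Rightarrow> 'v \<Rightarrow> 'v pnode set set" where
  "gadget_L m v = {{Grid v i j | j. j \<le> m} | i. i \<le> m}"

definition gadget_R :: "nat \<Rightarrow> 'v \<Rightarrow> 'v pnode set set" where
  "gadget_R m v = {{Grid v j i | j. j \<le> m} | i. i \<le> m}"

definition P_verts :: "'v set \<Rightarrow> ('v \<times> 'v) set \<Rightarrow> 'v pnode set" where
  "P_verts V E = (\<Union>v\<in>V. gadget_verts (card E) v) \<union> ArcN ` E"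

definition P_arcs :: "'v set \<Rightarrow> ('v \<times> 'v) set \<Rightarrow> ('v \<times> 'v \<Rightarrow> nat)
    \<Rightarrow> ('v pnode \<times> 'v pnode) set" where
  "P_arcs V E e = (\<Union>v\<in>V. gadget_arcs (card E) v) \<union>
     {(ArcN (v, u), Grid v (e (v, u)) 0) | v u. (v, u) \<in> E} \<union>
     {(ArcN (v, u), Grid u 0 (e (v, u))) | v u. (v, u) \<in> E}"

definition is_partition :: "'a set set \<Rightarrow> 'a set \<Rightarrow> bool" where
  "is_partition \<pi> X \<longleftrightarrow> \<Union>\<pi> = X \<and> {} \<notin> \<pi> \<and>
     (\<forall>P\<in>\<pi>. \<forall>Q\<in>\<pi>. P \<noteq> Q \<longrightarrow> P \<inter> Q = {})"

definition has_ham_path :: "('a \<times> 'a) set \<Rightarrow> 'a set \<Rightarrow> bool" where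
  "has_ham_path Es P \<longleftrightarrow> (\<exists>xs. distinct xs \<and> set xs = P \<and>
     (\<forall>i. Suc i < length xs \<longrightarrow> (xs ! i, xs ! Suc i) \<in> Es))"

definition quotient_arcs :: "('a \<times> 'a) set \<Rightarrow> 'a set set \<Rightarrow> ('a set \<times> 'a set) set" where
  "quotient_arcs Es \<pi> = {(P, Q). P \<in> \<pi> \<and> Q \<in> \<pi> \<and> P \<noteq> Q \<and>
     (\<exists>x\<in>P. \<exists>y\<in>Q. (x, y) \<in> Es)}"

definition H_star_partition :: "'a set \<Rightarrow> ('a \<times> 'a) set \<Rightarrow> 'a set set \<Rightarrow> bool" where
  "H_star_partition Vs Es \<pi> \<longleftrightarrow> is_partition \<pi> Vs \<and>
     (\<forall>P\<in>\<pi>. has_ham_path Es P) \<and> acyclic (quotient_arcs Es \<pi>)"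

definition restrict_partition :: "'a set set \<Rightarrow> 'a set \<Rightarrow> 'a set set" where
  "restrict_partition \<pi> S = {P \<inter> S | P. P \<in> \<pi> \<and> P \<inter> S \<noteq> {}}"

definition well_oriented :: "nat \<Rightarrow> 'v pnode set set \<Rightarrow> 'v \<Rightarrow> bool" where
  "well_oriented m \<pi> v \<longleftrightarrow>
     restrict_partition \<pi> (gadget_verts m v) = gadget_L m v \<or>
     restrict_partition \<pi> (gadget_verts m v) = gadget_R m v"

end

theory Submission
  imports Defs
begin

lemma cyc_trancl: assumes "0 < k" "\<forall>i<k. (f i, f (Suc i mod k)) \<in> r\<^sup>+" shows "(f 0, f 0) \<in> r\<^sup>+"
proof -
  have "0 < j \<longrightarrow> j \<le> k \<longrightarrow> (f 0, f (j mod k)) \<in> r\<^sup>+" for j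
  proof (induction j)
    case 0 then show ?case by simp
  next
    case (Suc j)
    show ?case
    proof (intro impI)
      assume j: "Suc j \<le> k"
      have s: "(f j, f (Suc j mod k)) \<in> r\<^sup>+" using assms(2) j by auto
      show "(f 0, f (Suc j mod k)) \<in> r\<^sup>+"
      proof (cases j)
        case 0 then show ?thesis using s by simp
      next
        case (Suc j')
        then have "(f 0, f j) \<in> r\<^sup>+" using Suc.IH j by simp
        then show ?thesis using s by (meson trancl_trans)
      qed
    qed
  qed
  from this[of k] assms(1) show ?thesis by simp
qed

lemma cyc_prop: assumes "j < k" "P j" "\<forall>i<k. P i \<longrightarrow> P (Suc i mod k)" and "i < k" shows "P i"
proof -
  have "P ((j + t) mod k)" for t
  proof (induction t)
    case 0 then show ?case using assms by simp
  next
    case (Suc t)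
    have "(j + Suc t) mod k = Suc ((j + t) mod k) mod k" by (simp add: mod_Suc_eq)
    moreover have "(j + t) mod k < k" using assms(1) by simp
    ultimately show ?case using Suc assms(3) by metis
  qed
  from this[of "i + k - j"] show ?thesis using assms by simp
qed

locale L59 =
  fixes V :: "'v set" and E :: "('v \<times> 'v) set"
    and e :: "'v \<times> 'v \<Rightarrow> nat" and \<pi> :: "'v pnode set set"
  assumes std: "std_graph V E"
    and bij: "bij_betw e E {1..card E}"
    and H: "H_star_partition (P_verts V E) (P_arcs V E e) \<pi>"
    and wo: "\<forall>v\<in>V. well_oriented (card E) \<pi> v"
begin

abbreviation "m \<equiv> card E"
abbreviation "Es \<equiv> P_arcs V E e"
abbreviation "Vs \<equiv> P_verts V E"
abbreviation "Q \<equiv> quotient_arcs Es \<pi>"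
definition "isL v \<longleftrightarrow> restrict_partition \<pi> (gadget_verts m v) = gadget_L m v"

lemma finV: "finite V" and EV: "E \<subseteq> V \<times> V" and noloop: "(v,v) \<notin> E"
  using std by (auto simp: std_graph_def)

lemma finE: "finite E"
  using finV EV by (meson finite_SigmaI finite_subset)

lemma e_range: "a \<in> E \<Longrightarrow> 1 \<le> e a \<and> e a \<le> m"
  using bij_betw_apply[OF bij] by auto

lemma part: "is_partition \<pi> Vs" and ham: "P \<in> \<pi> \<Longrightarrow> has_ham_path Es P"
  and acyc: "acyclic Q"
  using H by (auto simp: H_star_partition_def)

lemma grid_Vs: "Grid v i j \<in> Vs \<longleftrightarrow> v \<in> V \<and> i \<le> m \<and> j \<le> m"
  by (auto simp: P_verts_def gadget_verts_def)

lemma no_in_ArcN: "(x, ArcN a) \<notin> Es"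
  by (auto simp: P_arcs_def gadget_arcs_def)

lemma grid_out: "(Grid v i j, y) \<in> Es \<Longrightarrow> \<exists>i' j'. y = Grid v i' j'"
  by (auto simp: P_arcs_def gadget_arcs_def)

lemma no_in_00: "(x, Grid v 0 0) \<notin> Es"
proof
  assume "(x, Grid v 0 0) \<in> Es"
  then show False using e_range by (fastforce simp: P_arcs_def gadget_arcs_def)
qed

lemma arc_out: "(ArcN a, y) \<in> Es \<Longrightarrow> a \<in> E \<and> (y = Grid (fst a) (e a) 0 \<or> y = Grid (snd a) 0 (e a))"
  by (auto simp: P_arcs_def gadget_arcs_def)

lemma Es_Vs: "(x,y) \<in> Es \<Longrightarrow> x \<in> Vs \<and> y \<in> Vs"
  using EV e_range by (fastforce simp: P_arcs_def gadget_arcs_def P_verts_def gadget_verts_def)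

lemma pos0: assumes "distinct xs" "x \<in> set xs" "\<forall>i. Suc i < length xs \<longrightarrow> (xs ! i, xs ! Suc i) \<in> Es"
  "\<And>z. (z, x) \<notin> Es" shows "xs ! 0 = x"
proof -
  obtain k where k: "k < length xs" "xs ! k = x" using assms(2) by (meson in_set_conv_nth)
  show ?thesis
  proof (cases k)
    case 0 then show ?thesis using k by simp
  next
    case (Suc j)
    then have "(xs ! j, xs ! Suc j) \<in> Es" using assms(3) k by auto
    then show ?thesis using assms(4) k Suc by simp
  qed
qed

lemma blk_sub: "P \<in> \<pi> \<Longrightarrow> P \<subseteq> Vs"
  using part by (auto simp: is_partition_def)

lemma blk_uniq: "P \<in> \<pi> \<Longrightarrow> P' \<in> \<pi> \<Longrightarrow> x \<in> P \<Longrightarrow> x \<in> P' \<Longrightarrow> P = P'"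
  using part by (auto simp: is_partition_def)

lemma blk_ex: "x \<in> Vs \<Longrightarrow> \<exists>P\<in>\<pi>. x \<in> P"
  using part by (auto simp: is_partition_def)

definition "blk x = (SOME P. P \<in> \<pi> \<and> x \<in> P)"

lemma blk: "x \<in> Vs \<Longrightarrow> blk x \<in> \<pi> \<and> x \<in> blk x"
  unfolding blk_def using blk_ex by (metis (mono_tags, lifting) someI_ex)

lemma blk_eq: "P \<in> \<pi> \<Longrightarrow> x \<in> P \<Longrightarrow> blk x = P"
  using blk blk_uniq blk_sub by blast

lemma edge_Q: "(x,y) \<in> Es \<Longrightarrow> (blk x, blk y) \<in> Q\<^sup>*"
proof -
  assume a: "(x,y) \<in> Es"
  then have "x \<in> Vs" "y \<in> Vs" using Es_Vs by auto
  then have b: "blk x \<in> \<pi>" "x \<in> blk x" "blk y \<in> \<pi>" "y \<in> blk y" using blk by auto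
  show ?thesis
  proof (cases "blk x = blk y")
    case False
    then have "(blk x, blk y) \<in> Q" using a b by (auto simp: quotient_arcs_def)
    then show ?thesis by auto
  qed simp
qed

lemma edge_Q_strict: "(x,y) \<in> Es \<Longrightarrow> blk x \<noteq> blk y \<Longrightarrow> (blk x, blk y) \<in> Q"
proof -
  assume a: "(x,y) \<in> Es" "blk x \<noteq> blk y"
  then have "x \<in> Vs" "y \<in> Vs" using Es_Vs by auto
  then have b: "blk x \<in> \<pi>" "x \<in> blk x" "blk y \<in> \<pi>" "y \<in> blk y" using blk by auto
  then show ?thesis using a by (auto simp: quotient_arcs_def)
qed

lemma same_name_aux: assumes "\<forall>i. Suc i < length xs \<longrightarrow> (xs ! i, xs ! Suc i) \<in> Es"
  "p < length xs" "xs ! p = Grid v i j"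
  shows "p + d < length xs \<Longrightarrow> \<exists>i' j'. xs ! (p + d) = Grid v i' j'"
proof (induction d)
  case 0 then show ?case using assms by auto
next
  case (Suc d)
  then obtain i' j' where "xs ! (p+d) = Grid v i' j'" by auto
  moreover have "(xs ! (p+d), xs ! Suc (p+d)) \<in> Es" using assms(1) Suc.prems by auto
  ultimately show ?case using grid_out by auto
qed

lemma same_name: assumes "P \<in> \<pi>" "Grid v i j \<in> P" "Grid w k l \<in> P" shows "v = w"
proof -
  obtain xs where xs: "distinct xs" "set xs = P" "\<forall>i. Suc i < length xs \<longrightarrow> (xs ! i, xs ! Suc i) \<in> Es"
    using ham[OF assms(1)] by (auto simp: has_ham_path_def)
  obtain p where p: "p < length xs" "xs ! p = Grid v i j" using xs(2) assms(2) by (metis in_set_conv_nth)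
  obtain q where q: "q < length xs" "xs ! q = Grid w k l" using xs(2) assms(3) by (metis in_set_conv_nth)
  show ?thesis
  proof (cases "p \<le> q")
    case True
    then show ?thesis using same_name_aux[OF xs(3) p, of "q - p"] q by auto
  next
    case False
    then show ?thesis using same_name_aux[OF xs(3) q, of "p - q"] p by auto
  qed
qed

lemma resto: "B \<in> \<pi> \<Longrightarrow> x \<in> B \<Longrightarrow> x \<in> gadget_verts m v \<Longrightarrow>
   B \<inter> gadget_verts m v \<in> restrict_partition \<pi> (gadget_verts m v)"
  unfolding restrict_partition_def by blast

lemma rowL: assumes "B \<in> \<pi>" "Grid v i j \<in> B" "isL v" shows "Grid v i 0 \<in> B"
proof -
  have g: "Grid v i j \<in> gadget_verts m v" using blk_sub[OF assms(1)] assms(2) grid_Vs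
    by (auto simp: gadget_verts_def)
  have "B \<inter> gadget_verts m v \<in> gadget_L m v" using resto[OF assms(1,2) g] assms(3) by (simp add: isL_def)
  then obtain i' where i': "i' \<le> m" "B \<inter> gadget_verts m v = {Grid v i' j' | j'. j' \<le> m}"
    unfolding gadget_L_def by blast
  have "Grid v i j \<in> {Grid v i' j' | j'. j' \<le> m}" using i'(2) assms(2) g by blast
  then have "i' = i" by auto
  then show ?thesis using i' by blast
qed

lemma colR: assumes "B \<in> \<pi>" "Grid v i j \<in> B" "\<not> isL v" shows "Grid v 0 j \<in> B"
proof -
  have vV: "v \<in> V" using blk_sub[OF assms(1)] assms(2) grid_Vs by auto
  have g: "Grid v i j \<in> gadget_verts m v" using blk_sub[OF assms(1)] assms(2) grid_Vs
    by (auto simp: gadget_verts_def)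
  have "restrict_partition \<pi> (gadget_verts m v) = gadget_R m v"
    using wo vV assms(3) by (auto simp: well_oriented_def isL_def)
  then have "B \<inter> gadget_verts m v \<in> gadget_R m v" using resto[OF assms(1,2) g] by simp
  then obtain i' where i': "i' \<le> m" "B \<inter> gadget_verts m v = {Grid v j' i' | j'. j' \<le> m}"
    unfolding gadget_R_def by blast
  have "Grid v i j \<in> {Grid v j' i' | j'. j' \<le> m}" using i'(2) assms(2) g by blast
  then have "i' = j" by auto
  then show ?thesis using i' by blast
qed

lemma merged: assumes a: "(v,u) \<in> E" and B: "B \<in> \<pi>" "ArcN (v,u) \<in> B" "B \<noteq> {ArcN (v,u)}"
  shows "(isL v \<and> Grid v (e (v,u)) 0 \<in> B) \<or> (\<not> isL u \<and> Grid u 0 (e (v,u)) \<in> B)"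
proof -
  obtain xs where xs: "distinct xs" "set xs = B" "\<forall>i. Suc i < length xs \<longrightarrow> (xs ! i, xs ! Suc i) \<in> Es"
    using ham[OF B(1)] by (auto simp: has_ham_path_def)
  have x0: "xs ! 0 = ArcN (v,u)" using pos0[OF xs(1) _ xs(3)] xs(2) B(2) no_in_ArcN by auto
  obtain y where y: "y \<in> B" "y \<noteq> ArcN (v,u)" using B by blast
  then obtain k where k: "k < length xs" "xs ! k = y" using xs(2) by (metis in_set_conv_nth)
  have "k \<noteq> 0" using k y x0 by (metis)
  then have "\<not> length xs < 2" using k by linarith
  then have "(xs ! 0, xs ! 1) \<in> Es" using xs(3) by auto
  then have y: "xs ! 1 = Grid v (e (v,u)) 0 \<or> xs ! 1 = Grid u 0 (e (v,u))" using arc_out[of "(v,u)" "xs ! 1"] x0 by simp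
  have x1: "xs ! 1 \<in> B" using xs(2) \<open>\<not> length xs < 2\<close> by auto
  have no00: "\<And>w. Grid w 0 0 \<notin> B"
  proof
    fix w assume "Grid w 0 0 \<in> B"
    then have "xs ! 0 = Grid w 0 0" using pos0[OF xs(1) _ xs(3)] xs(2) no_in_00 by auto
    then show False using x0 by simp
  qed
  show ?thesis
  proof (cases "xs ! 1 = Grid v (e (v,u)) 0")
    case True
    then show ?thesis using x1 colR[OF B(1), of v "e (v,u)" 0] no00 by auto
  next
    case False
    then have "xs ! 1 = Grid u 0 (e (v,u))" using y by auto
    then show ?thesis using x1 rowL[OF B(1), of u 0 "e (v,u)"] no00 by auto
  qed
qed

lemma chain_rows: "isL u \<Longrightarrow> u \<in> V \<Longrightarrow> i \<le> m \<Longrightarrow> (blk (Grid u 0 0), blk (Grid u i 0)) \<in> Q\<^sup>*"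
proof (induction i)
  case (Suc i)
  have "(Grid u i 0, Grid u (Suc i) 0) \<in> Es" using Suc.prems
    by (auto simp: P_arcs_def gadget_arcs_def)
  then show ?case using Suc edge_Q by (meson Suc_leD rtrancl_trans)
qed simp

lemma chain_cols: "u \<in> V \<Longrightarrow> i \<le> m \<Longrightarrow> (blk (Grid u 0 0), blk (Grid u 0 i)) \<in> Q\<^sup>*"
proof (induction i)
  case (Suc i)
  have "(Grid u 0 i, Grid u 0 (Suc i)) \<in> Es" using Suc.prems
    by (auto simp: P_arcs_def gadget_arcs_def)
  then show ?case using Suc edge_Q by (meson Suc_leD rtrancl_trans)
qed simp

lemma fas: assumes cyc: "dir_cycle E cs" shows "{a\<in>E. {ArcN a}\<in>\<pi>} \<inter> cycle_arcs cs \<noteq> {}"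
proof
  assume emp: "{a\<in>E. {ArcN a}\<in>\<pi>} \<inter> cycle_arcs cs = {}"
  define k where "k = length cs"
  define c where "c i = cs ! i" for i
  define nx where "nx i = Suc i mod k" for i
  define arc where "arc i = (c i, c (nx i))" for i
  define B where "B i = blk (ArcN (arc i))" for i
  have k0: "0 < k" using cyc by (simp add: dir_cycle_def k_def)
  have nxk: "i < k \<Longrightarrow> nx i < k" for i using k0 by (simp add: nx_def)
  have arcE: "i < k \<Longrightarrow> arc i \<in> E" for i using cyc
    by (simp add: dir_cycle_def k_def arc_def c_def nx_def)
  have arcC: "i < k \<Longrightarrow> arc i \<in> cycle_arcs cs" for i
    unfolding cycle_arcs_def arc_def c_def nx_def k_def by blast
  have nsing: "i < k \<Longrightarrow> {ArcN (arc i)} \<notin> \<pi>" for i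
  proof
    assume i: "i < k" and s: "{ArcN (arc i)} \<in> \<pi>"
    then have "arc i \<in> {a\<in>E. {ArcN a}\<in>\<pi>} \<inter> cycle_arcs cs" using arcE[OF i] arcC[OF i] by simp
    then show False using emp by simp
  qed
  have neq: "i < k \<Longrightarrow> c i \<noteq> c (nx i)" for i using arcE[of i] noloop[of "c i"] by (auto simp: arc_def)
  have cV: "i < k \<Longrightarrow> c i \<in> V" for i using arcE[of i] EV by (auto simp: arc_def)
  have Bi: "i < k \<Longrightarrow> B i \<in> \<pi> \<and> ArcN (arc i) \<in> B i" for i
  proof -
    assume i: "i < k"
    have "ArcN (arc i) \<in> Vs" using arcE[OF i] by (simp add: P_verts_def)
    then show ?thesis using blk[of "ArcN (arc i)"] unfolding B_def by blast
  qed
  have M: "i < k \<Longrightarrow> (isL (c i) \<and> Grid (c i) (e (arc i)) 0 \<in> B i) \<or>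
      (\<not> isL (c (nx i)) \<and> Grid (c (nx i)) 0 (e (arc i)) \<in> B i)" for i
  proof -
    assume i: "i < k"
    have ne: "B i \<noteq> {ArcN (arc i)}" using nsing[OF i] Bi[OF i] by metis
    have ai: "arc i = (c i, c (nx i))" by (simp add: arc_def)
    have bi: "B i \<in> \<pi>" "ArcN (arc i) \<in> B i" using Bi[OF i] by auto
    show ?thesis using merged[of "c i" "c (nx i)" "B i", folded ai, OF arcE[OF i] bi ne] .
  qed
  have eR: "i < k \<Longrightarrow> e (arc i) \<le> m" for i using e_range arcE by auto
  have nocyc: "(x, x) \<notin> Q\<^sup>+" for x using acyc by (simp add: acyclic_def)
  consider "\<forall>i<k. isL (c i)" | "\<forall>i<k. \<not> isL (c i)"
  proof -
    assume h1: "\<forall>i<k. isL (c i) \<Longrightarrow> thesis" and h2: "\<forall>i<k. \<not> isL (c i) \<Longrightarrow> thesis"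
    show thesis
    proof (cases "\<forall>i<k. isL (c i)")
      case True then show ?thesis using h1 by blast
    next
      case False
      then obtain j where j: "j < k" "\<not> isL (c j)" by blast
      have "\<forall>i<k. \<not> isL (c i) \<longrightarrow> \<not> isL (c (Suc i mod k))"
      proof (intro allI impI)
        fix i assume i: "i < k" "\<not> isL (c i)"
        show "\<not> isL (c (Suc i mod k))" using M[OF i(1)] i(2) unfolding nx_def by auto
      qed
      then have "\<forall>i<k. \<not> isL (c i)" using cyc_prop[of j k "\<lambda>i. \<not> isL (c i)"] j by blast
      then show ?thesis using h2 by blast
    qed
  qed
  then show False
  proof cases
    case 1
    have step: "(B i, B (nx i)) \<in> Q\<^sup>+" if i: "i < k" for i
    proof -
      let ?u = "c (nx i)"
      have left: "Grid (c j) (e (arc j)) 0 \<in> B j" if "j < k" for j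
        using M[OF that] 1 nxk[OF that] by auto
      have ed: "(ArcN (arc i), Grid ?u 0 (e (arc i))) \<in> Es"
        using arcE[OF i] unfolding arc_def by (auto simp: P_arcs_def)
      have gV: "Grid ?u 0 (e (arc i)) \<in> Vs" using Es_Vs[OF ed] by auto
      let ?C = "blk (Grid ?u 0 (e (arc i)))"
      have C: "?C \<in> \<pi>" "Grid ?u 0 (e (arc i)) \<in> ?C" using blk[OF gV] by auto
      have BC: "B i \<noteq> ?C"
        using same_name[OF C(1) C(2), of "c i" "e (arc i)" 0] left[OF i] neq[OF i] by auto
      have q1: "(B i, ?C) \<in> Q" using edge_Q_strict[OF ed] BC unfolding B_def by simp
      have "Grid ?u 0 0 \<in> ?C" using rowL[OF C] 1 nxk[OF i] by auto
      then have C00: "?C = blk (Grid ?u 0 0)" using blk_eq[OF C(1)] by metis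
      have "(blk (Grid ?u 0 0), blk (Grid ?u (e (arc (nx i))) 0)) \<in> Q\<^sup>*"
        using chain_rows[of ?u "e (arc (nx i))"] 1 nxk[OF i] cV[OF nxk[OF i]] eR[OF nxk[OF i]] by auto
      moreover have "blk (Grid ?u (e (arc (nx i))) 0) = B (nx i)"
        using blk_eq[of "B (nx i)"] Bi[OF nxk[OF i]] left[OF nxk[OF i]] by blast
      ultimately have "(?C, B (nx i)) \<in> Q\<^sup>*" using C00 by simp
      then show ?thesis using q1 by auto
    qed
    have "(B 0, B 0) \<in> Q\<^sup>+" using cyc_trancl[OF k0, of B Q] step unfolding nx_def by blast
    then show False using nocyc by blast
  next
    case 2
    have step: "(B (nx i), B i) \<in> Q\<^sup>+" if i: "i < k" for i
    proof -
      let ?u = "c (nx i)" and ?i' = "nx i"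
      have i': "?i' < k" using nxk[OF i] .
      have right: "Grid (c (nx j)) 0 (e (arc j)) \<in> B j" if "j < k" for j
        using M[OF that] 2 that by auto
      have ed: "(ArcN (arc ?i'), Grid ?u (e (arc ?i')) 0) \<in> Es"
        using arcE[OF i'] unfolding arc_def by (auto simp: P_arcs_def)
      have gV: "Grid ?u (e (arc ?i')) 0 \<in> Vs" using Es_Vs[OF ed] by auto
      let ?C = "blk (Grid ?u (e (arc ?i')) 0)"
      have C: "?C \<in> \<pi>" "Grid ?u (e (arc ?i')) 0 \<in> ?C" using blk[OF gV] by auto
      have BC: "B ?i' \<noteq> ?C"
        using same_name[OF C(1) C(2), of "c (nx ?i')" 0 "e (arc ?i')"] right[OF i'] neq[OF i'] by auto
      have q1: "(B ?i', ?C) \<in> Q" using edge_Q_strict[OF ed] BC unfolding B_def by simp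
      have "Grid ?u 0 0 \<in> ?C" using colR[OF C] 2 i' by auto
      then have C00: "?C = blk (Grid ?u 0 0)" using blk_eq[OF C(1)] by metis
      have "(blk (Grid ?u 0 0), blk (Grid ?u 0 (e (arc i)))) \<in> Q\<^sup>*"
        using chain_cols[of ?u "e (arc i)"] cV[OF i'] eR[OF i] by auto
      moreover have "blk (Grid ?u 0 (e (arc i))) = B i"
        using blk_eq[of "B i"] Bi[OF i] right[OF i] by blast
      ultimately have "(?C, B i) \<in> Q\<^sup>*" using C00 by simp
      then show ?thesis using q1 by auto
    qed
    have "\<forall>i<k. (B i, B (Suc i mod k)) \<in> (Q\<inverse>)\<^sup>+"
      using step unfolding nx_def by (simp add: trancl_converse)
    then have "(B 0, B 0) \<in> (Q\<inverse>)\<^sup>+" using cyc_trancl[OF k0, of B "Q\<inverse>"] by blast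
    then show False using nocyc by (simp add: trancl_converse)
  qed
qed

lemma fin_gadget: "finite (gadget_verts n v)"
proof -
  have "gadget_verts n v \<subseteq> (\<lambda>(i,j). Grid v i j) ` ({..n} \<times> {..n})"
    by (auto simp: gadget_verts_def)
  then show ?thesis by (rule finite_subset) simp
qed

lemma finVs: "finite Vs"
  using finV finE fin_gadget by (auto simp: P_verts_def)

lemma finpi: "finite \<pi>"
proof -
  have "\<pi> \<subseteq> Pow Vs" using blk_sub by auto
  then show ?thesis using finVs by (meson finite_Pow_iff finite_subset)
qed

lemma card_L: "card (gadget_L n v) = Suc n"
proof -
  have "gadget_L n v = (\<lambda>i. {Grid v i j | j. j \<le> n}) ` {..n}" by (auto simp: gadget_L_def)
  moreover have "inj_on (\<lambda>i. {Grid v i j | j. j \<le> n}) {..n}"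
  proof (rule inj_onI)
    fix i i' assume "{Grid v i j | j. j \<le> n} = {Grid v i' j | j. j \<le> n}"
    moreover have "Grid v i 0 \<in> {Grid v i j | j. j \<le> n}" by auto
    ultimately have "Grid v i 0 \<in> {Grid v i' j | j. j \<le> n}" by simp
    then show "i = i'" by auto
  qed
  ultimately show ?thesis by (simp add: card_image)
qed

lemma card_R: "card (gadget_R n v) = Suc n"
proof -
  have "gadget_R n v = (\<lambda>i. {Grid v j i | j. j \<le> n}) ` {..n}" by (auto simp: gadget_R_def)
  moreover have "inj_on (\<lambda>i. {Grid v j i | j. j \<le> n}) {..n}"
  proof (rule inj_onI)
    fix i i' assume "{Grid v j i | j. j \<le> n} = {Grid v j i' | j. j \<le> n}"
    moreover have "Grid v 0 i \<in> {Grid v j i | j. j \<le> n}" by auto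
    ultimately have "Grid v 0 i \<in> {Grid v j i' | j. j \<le> n}" by simp
    then show "i = i'" by auto
  qed
  ultimately show ?thesis by (simp add: card_image)
qed

definition "A v = {P \<in> \<pi>. P \<inter> gadget_verts m v \<noteq> {}}"

lemma card_A: assumes "v \<in> V" shows "Suc m \<le> card (A v)"
proof -
  have r: "restrict_partition \<pi> (gadget_verts m v) = (\<lambda>P. P \<inter> gadget_verts m v) ` A v"
    unfolding restrict_partition_def A_def by blast
  have "card (restrict_partition \<pi> (gadget_verts m v)) = Suc m"
    using wo assms card_L[of m v] card_R[of m v] unfolding well_oriented_def by metis
  moreover have "card ((\<lambda>P. P \<inter> gadget_verts m v) ` A v) \<le> card (A v)"
    using finpi by (intro card_image_le) (simp add: A_def)
  ultimately show ?thesis using r by simp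
qed

lemma A_disj: assumes "v \<noteq> w" shows "A v \<inter> A w = {}"
proof (rule ccontr)
  assume "A v \<inter> A w \<noteq> {}"
  then obtain P x y where "P \<in> \<pi>" "x \<in> P" "x \<in> gadget_verts m v" "y \<in> P" "y \<in> gadget_verts m w"
    unfolding A_def by blast
  then show False using same_name assms by (fastforce simp: gadget_verts_def)
qed

lemma count: "card {a\<in>E. {ArcN a}\<in>\<pi>} + card V * Suc m \<le> card \<pi>"
proof -
  let ?F = "{a\<in>E. {ArcN a}\<in>\<pi>}"
  let ?S = "(\<lambda>a. {ArcN a}) ` ?F"
  let ?U = "\<Union>v\<in>V. A v"
  have cS: "card ?S = card ?F" by (rule card_image) (auto simp: inj_on_def)
  have finA: "finite (A v)" for v using finpi by (simp add: A_def)
  have cU: "card ?U = (\<Sum>v\<in>V. card (A v))"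
    using finV finA A_disj by (intro card_UN_disjoint) auto
  have "(\<Sum>v\<in>V. Suc m) \<le> (\<Sum>v\<in>V. card (A v))" using card_A by (intro sum_mono) auto
  then have cU2: "card V * Suc m \<le> card ?U" using cU by simp
  have disj: "?S \<inter> ?U = {}" by (auto simp: A_def gadget_verts_def)
  have finS: "finite ?S" using finE by simp
  have finU: "finite ?U" using finV finA by simp
  have sub: "?S \<union> ?U \<subseteq> \<pi>" by (auto simp: A_def)
  have "card (?S \<union> ?U) = card ?S + card ?U" using card_Un_disjoint[OF finS finU disj] .
  moreover have "card (?S \<union> ?U) \<le> card \<pi>" using card_mono[OF finpi sub] .
  ultimately show ?thesis using cS cU2 by linarith
qed

end

theorem lemma5p9:
  fixes V :: "'v set" and E :: "('v \<times> 'v) set"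
    and e :: "'v \<times> 'v \<Rightarrow> nat" and \<pi> :: "'v pnode set set"
  assumes "std_graph V E"
    and "bij_betw e E {1..card E}"
    and "H_star_partition (P_verts V E) (P_arcs V E e) \<pi>"
    and "\<forall>v\<in>V. well_oriented (card E) \<pi> v"
  shows "feedback_arc_set E {a \<in> E. {ArcN a} \<in> \<pi>}
    \<and> int (card {a \<in> E. {ArcN a} \<in> \<pi>}) \<le> int (card \<pi>) - int (card V * (card E + 1))"
proof -
  interpret L59 V E e \<pi> using assms by unfold_locales
  have "feedback_arc_set E {a \<in> E. {ArcN a} \<in> \<pi>}"
    unfolding feedback_arc_set_def using fas by auto
  moreover have "card {a\<in>E. {ArcN a}\<in>\<pi>} + card V * Suc (card E) \<le> card \<pi>" by (rule count)
  then have "card {a\<in>E. {ArcN a}\<in>\<pi>} + card V * (card E + 1) \<le> card \<pi>" by simp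
  then have "int (card {a\<in>E. {ArcN a}\<in>\<pi>}) + int (card V * (card E + 1)) \<le> int (card \<pi>)"
    by (simp only: of_nat_add[symmetric] of_nat_le_iff)
  ultimately show ?thesis by linarith
qed

end
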